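(* Let $a,b,c,m>0$ with $0<a<1$ and consider, with bifurcation parameter $k>0$, the system $$\frac{dx}{dt}=bx(1-x-cy),\qquad \frac{dy}{dt}=y\Big(\frac{1}{1+kx}-y-ax-mxy\Big).$$ Let $k^*=\frac1a-1$. Suppose $u(E)<0$ and $m\ne -a^2c+2ac-1$. Then the system undergoes a transcritical bifurcation around the boundary equilibrium $E_1=(1,0)$ at the bifurcation parameter threshold $k_{TR}=k^*$.
   Context: Here $u(x)=A_1x^3+A_2x^2+A_3x+A_4$ with $A_1=km$, $A_2=(-ac-m+1)k+m$, $A_3=-ac-k-m+1$, $A_4=c-1$ (the cubic whose roots in $(0,1)$ give the $x$-coordinates of positive equilibria $(x,(1-x)/c)$), and $E$ denotes the larger real root of $u'(x)$ (assumed to exist). All parameters are positive. *)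

theory Defs
  imports "HOL-Analysis.Analysis"
begin

text \<open>A planar system  x' = f k x y,  y' = g k x y  depending on a real parameter k.\<close>

definition is_equilibrium ::
  "(real \<Rightarrow> real \<Rightarrow> real \<Rightarrow> real) \<Rightarrow> (real \<Rightarrow> real \<Rightarrow> real \<Rightarrow> real) \<Rightarrow> real \<Rightarrow> real \<times> real \<Rightarrow> bool"
  where "is_equilibrium f g k p \<longleftrightarrow> f k (fst p) (snd p) = 0 \<and> g k (fst p) (snd p) = 0"

definition has_jacobian ::
  "(real \<Rightarrow> real \<Rightarrow> real \<Rightarrow> real) \<Rightarrow> (real \<Rightarrow> real \<Rightarrow> real \<Rightarrow> real) \<Rightarrow> real \<Rightarrow> real \<times> real \<Rightarrow> bool"
  where "has_jacobian f g k p \<longleftrightarrow>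
     (\<lambda>s. f k s (snd p)) differentiable (at (fst p)) \<and> (\<lambda>s. f k (fst p) s) differentiable (at (snd p)) \<and>
     (\<lambda>s. g k s (snd p)) differentiable (at (fst p)) \<and> (\<lambda>s. g k (fst p) s) differentiable (at (snd p))"

definition jacobian_eigenvalues ::
  "(real \<Rightarrow> real \<Rightarrow> real \<Rightarrow> real) \<Rightarrow> (real \<Rightarrow> real \<Rightarrow> real \<Rightarrow> real) \<Rightarrow> real \<Rightarrow> real \<times> real \<Rightarrow> complex set"
  where "jacobian_eigenvalues f g k p =
    (let a11 = deriv (\<lambda>s. f k s (snd p)) (fst p);
         a12 = deriv (\<lambda>s. f k (fst p) s) (snd p);
         a21 = deriv (\<lambda>s. g k s (snd p)) (fst p);
         a22 = deriv (\<lambda>s. g k (fst p) s) (snd p)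
     in {z::complex. z\<^sup>2 - of_real (a11 + a22) * z + of_real (a11 * a22 - a12 * a21) = 0})"

definition lin_stable where
  "lin_stable f g k p \<longleftrightarrow> is_equilibrium f g k p \<and> has_jacobian f g k p \<and>
     (\<forall>z\<in>jacobian_eigenvalues f g k p. Re z < 0)"

definition lin_unstable where
  "lin_unstable f g k p \<longleftrightarrow> is_equilibrium f g k p \<and> has_jacobian f g k p \<and>
     (\<exists>z\<in>jacobian_eigenvalues f g k p. Re z > 0)"

definition transcritical_bifurcation ::
  "(real \<Rightarrow> real \<Rightarrow> real \<Rightarrow> real) \<Rightarrow> (real \<Rightarrow> real \<Rightarrow> real \<Rightarrow> real) \<Rightarrow> real \<times> real \<Rightarrow> real \<Rightarrow> bool"
  where "transcritical_bifurcation f g p0 k0 \<longleftrightarrow>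
    (\<exists>\<delta>>0. \<exists>\<epsilon>>0. \<exists>q :: real \<Rightarrow> real \<times> real.
       (\<forall>k. \<bar>k - k0\<bar> < \<delta> \<longrightarrow>
           is_equilibrium f g k p0 \<and> is_equilibrium f g k (q k) \<and>
           (\<forall>p. dist p p0 < \<epsilon> \<and> is_equilibrium f g k p \<longrightarrow> p = p0 \<or> p = q k)) \<and>
       continuous_on {k0 - \<delta> <..< k0 + \<delta>} q \<and> q k0 = p0 \<and>
       (\<forall>k. 0 < \<bar>k - k0\<bar> \<and> \<bar>k - k0\<bar> < \<delta> \<longrightarrow> q k \<noteq> p0) \<and>
       (((\<forall>k. k0 - \<delta> < k \<and> k < k0 \<longrightarrow> lin_stable f g k p0 \<and> lin_unstable f g k (q k)) \<and>
         (\<forall>k. k0 < k \<and> k < k0 + \<delta> \<longrightarrow> lin_unstable f g k p0 \<and> lin_stable f g k (q k))) \<or>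
        ((\<forall>k. k0 - \<delta> < k \<and> k < k0 \<longrightarrow> lin_unstable f g k p0 \<and> lin_stable f g k (q k)) \<and>
         (\<forall>k. k0 < k \<and> k < k0 + \<delta> \<longrightarrow> lin_stable f g k p0 \<and> lin_unstable f g k (q k)))))"

definition ucubic :: "real \<Rightarrow> real \<Rightarrow> real \<Rightarrow> real \<Rightarrow> real \<Rightarrow> real" where
  "ucubic a c m k x =
     (k * m) * x ^ 3 + ((- a * c - m + 1) * k + m) * x\<^sup>2 + (- a * c - k - m + 1) * x + (c - 1)"

end

theory Submission imports Defs begin

lemma eig_stable:
  fixes T D :: real and z :: complex
  assumes "T < 0" "D > 0" "z\<^sup>2 - of_real T * z + of_real D = 0"
  shows "Re z < 0"
proof -
  have re: "(Re z)^2 - (Im z)^2 - T * Re z + D = 0"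
    using arg_cong[OF assms(3), of Re] by (simp add: power2_eq_square)
  have im: "2 * Re z * Im z - T * Im z = 0"
    using arg_cong[OF assms(3), of Im] by (simp add: power2_eq_square)
  show ?thesis
  proof (cases "Im z = 0")
    case True
    show ?thesis
    proof (rule ccontr)
      assume "\<not> Re z < 0"
      hence "Re z \<ge> 0" by simp
      hence "T * Re z \<le> 0" using assms(1) by (simp add: mult_nonpos_nonneg)
      moreover have "(Re z)^2 \<ge> 0" by simp
      moreover have "(Re z)^2 - T * Re z + D = 0" using re True by simp
      ultimately show False using assms(2) by linarith
    qed
  next
    case False
    hence "2 * Re z - T = 0" using im by (metis mult.commute mult_eq_0_iff right_diff_distrib')
    thus ?thesis using assms(1) by linarith
  qed
qed

lemma eig_unstable:
  fixes T D :: real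
  assumes "D < 0"
  shows "\<exists>z\<in>{z::complex. z\<^sup>2 - of_real T * z + of_real D = 0}. Re z > 0"
proof -
  define s where "s = sqrt (T^2 - 4*D)"
  have "T^2 - 4*D \<ge> 0" using assms by (smt (verit) zero_le_power2)
  hence s2: "s^2 = T^2 - 4*D" unfolding s_def by simp
  have "sqrt (T^2) < s" unfolding s_def using assms by (intro real_sqrt_less_mono) simp
  hence "s > \<bar>T\<bar>" by simp
  define x where "x = (T + s)/2"
  have xp: "x > 0" unfolding x_def using \<open>s > \<bar>T\<bar>\<close> by (simp add: abs_less_iff)
  have "x^2 - T*x + D = 0" unfolding x_def using s2
    by (simp add: power2_eq_square field_simps)
  hence "(complex_of_real x)\<^sup>2 - of_real T * of_real x + of_real D = 0"
    by (metis of_real_0 of_real_add of_real_diff of_real_mult of_real_power)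
  thus ?thesis using xp by (intro bexI[of _ "of_real x"]) auto
qed

lemma pos_nbhd:
  fixes h :: "real \<Rightarrow> real"
  assumes "isCont h 0" "h 0 > 0"
  shows "\<exists>d>0. \<forall>y. \<bar>y\<bar> < d \<longrightarrow> h y > 0"
proof -
  obtain d where "d > 0" "\<forall>y. dist y 0 < d \<longrightarrow> dist (h y) (h 0) < h 0"
    using assms unfolding continuous_at_eps_delta by blast
  thus ?thesis by (intro exI[of _ d]) (auto simp: dist_real_def)
qed


lemma jac:
  fixes a b c m k x y :: real
  assumes nz: "1 + k*x \<noteq> 0"
  shows "has_jacobian (\<lambda>k x y. b * x * (1 - x - c * y))
           (\<lambda>k x y. y * (1 / (1 + k * x) - y - a * x - m * x * y)) k (x,y)"
    and "jacobian_eigenvalues (\<lambda>k x y. b * x * (1 - x - c * y))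
           (\<lambda>k x y. y * (1 / (1 + k * x) - y - a * x - m * x * y)) k (x,y) =
         {z. z\<^sup>2 - of_real (b*(1-2*x-c*y) + (1/(1+k*x) - 2*y - a*x - 2*m*x*y)) * z
             + of_real (b*(1-2*x-c*y)*(1/(1+k*x) - 2*y - a*x - 2*m*x*y)
                        - (-b*c*x)*(y*(-k/(1+k*x)^2 - a - m*y))) = 0}"
proof -
  have "(1+k*x)^2 \<noteq> 0" using nz by simp
  moreover have "(1+k*x)^2 = 1 + (k*(k*(x*x)) + k*(x*2))" by (simp add: power2_eq_square algebra_simps)
  ultimately have nz2: "1 + (k*(k*(x*x)) + k*(x*2)) \<noteq> 0" by simp
  have d1: "((\<lambda>t. b*t*(1-t-c*y)) has_real_derivative b*(1-2*x-c*y)) (at x)"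
    by (auto intro!: derivative_eq_intros simp: algebra_simps)
  have d2: "((\<lambda>t. b*x*(1-x-c*t)) has_real_derivative -b*c*x) (at y)"
    by (auto intro!: derivative_eq_intros simp: algebra_simps)
  have d3: "((\<lambda>t. y*(1/(1+k*t) - y - a*t - m*t*y)) has_real_derivative y*(-k/(1+k*x)^2 - a - m*y)) (at x)"
    using nz apply (auto intro!: derivative_eq_intros)
    apply (simp add: field_simps power2_eq_square)
    done
  have d4: "((\<lambda>t. t*(1/(1+k*x) - t - a*x - m*x*t)) has_real_derivative (1/(1+k*x) - 2*y - a*x - 2*m*x*y)) (at y)"
    using nz apply (auto intro!: derivative_eq_intros simp: algebra_simps)
    using nz nz2 by (simp_all add: field_simps power2_eq_square)
  show "has_jacobian (\<lambda>k x y. b * x * (1 - x - c * y))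
           (\<lambda>k x y. y * (1 / (1 + k * x) - y - a * x - m * x * y)) k (x,y)"
    unfolding has_jacobian_def using d1 d2 d3 d4 by (auto simp: real_differentiable_def)
  show "jacobian_eigenvalues (\<lambda>k x y. b * x * (1 - x - c * y))
           (\<lambda>k x y. y * (1 / (1 + k * x) - y - a * x - m * x * y)) k (x,y) =
         {z. z\<^sup>2 - of_real (b*(1-2*x-c*y) + (1/(1+k*x) - 2*y - a*x - 2*m*x*y)) * z
             + of_real (b*(1-2*x-c*y)*(1/(1+k*x) - 2*y - a*x - 2*m*x*y)
                        - (-b*c*x)*(y*(-k/(1+k*x)^2 - a - m*y))) = 0}"
    unfolding jacobian_eigenvalues_def Let_def fst_conv snd_conv
    using DERIV_imp_deriv[OF d1] DERIV_imp_deriv[OF d2] DERIV_imp_deriv[OF d3] DERIV_imp_deriv[OF d4]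
    by simp
qed


lemma local_inverse:
  fixes K :: "real \<Rightarrow> real" and r :: real
  assumes r: "r > 0" and cont: "continuous_on {-r..r} K" and inj: "inj_on K {-r..r}"
    and ends: "(K (-r) < K 0 \<and> K 0 < K r) \<or> (K r < K 0 \<and> K 0 < K (-r))"
  shows "\<exists>\<delta>>0. \<exists>Y. continuous_on {K 0 - \<delta><..<K 0 + \<delta>} Y \<and>
           (\<forall>k. \<bar>k - K 0\<bar> < \<delta> \<longrightarrow> Y k \<in> {-r..r} \<and> K (Y k) = k) \<and> Y (K 0) = 0"
proof -
  define Y where "Y = inv_into {-r..r} K"
  have inv: "\<forall>y\<in>{-r..r}. Y (K y) = y" unfolding Y_def using inv_into_f_f[OF inj] by blast
  have cY: "continuous_on (K ` {-r..r}) Y" by (rule continuous_on_inv[OF cont compact_Icc inv])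
  define \<delta> where "\<delta> = min \<bar>K r - K 0\<bar> \<bar>K (-r) - K 0\<bar>"
  have dpos: "\<delta> > 0" unfolding \<delta>_def using ends by auto
  have sub: "k \<in> K ` {-r..r}" if "\<bar>k - K 0\<bar> < \<delta>" for k
  proof -
    have "\<exists>y. -r \<le> y \<and> y \<le> r \<and> K y = k"
      using ends
    proof
      assume e: "K (-r) < K 0 \<and> K 0 < K r"
      hence "K (-r) \<le> k" "k \<le> K r" using that unfolding \<delta>_def by auto
      thus ?thesis using IVT'[of K "-r" k r] cont r by auto
    next
      assume e: "K r < K 0 \<and> K 0 < K (-r)"
      hence "K r \<le> k" "k \<le> K (-r)" using that unfolding \<delta>_def by auto
      thus ?thesis using IVT2'[of K r k "-r"] cont r by auto
    qed
    thus ?thesis by auto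
  qed
  have "{K 0 - \<delta><..<K 0 + \<delta>} \<subseteq> K ` {-r..r}"
    using sub by (auto simp: abs_less_iff)
  hence c2: "continuous_on {K 0 - \<delta><..<K 0 + \<delta>} Y" using cY continuous_on_subset by blast
  have "\<forall>k. \<bar>k - K 0\<bar> < \<delta> \<longrightarrow> Y k \<in> {-r..r} \<and> K (Y k) = k"
  proof (intro allI impI)
    fix k assume "\<bar>k - K 0\<bar> < \<delta>"
    then obtain y where "y \<in> {-r..r}" "k = K y" using sub by blast
    thus "Y k \<in> {-r..r} \<and> K (Y k) = k" using inv by auto
  qed
  moreover have "Y (K 0) = 0" using inv r by auto
  ultimately show ?thesis using dpos c2 by blast
qed


definition wf :: "real \<Rightarrow> real \<Rightarrow> real \<Rightarrow> real \<Rightarrow> real" where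
  "wf a c m y = a*(1-c*y) + y + m*(1-c*y)*y"
definition Kf :: "real \<Rightarrow> real \<Rightarrow> real \<Rightarrow> real \<Rightarrow> real" where
  "Kf a c m y = (1 / wf a c m y - 1) / (1 - c*y)"
definition Kdf :: "real \<Rightarrow> real \<Rightarrow> real \<Rightarrow> real \<Rightarrow> real" where
  "Kdf a c m y = (-(1 - a*c + m - 2*m*c*y) * (1-c*y) / (wf a c m y)^2 + c*(1/wf a c m y - 1)) / (1-c*y)^2"
definition Bqf :: "real \<Rightarrow> real \<Rightarrow> real \<Rightarrow> real \<Rightarrow> real" where
  "Bqf a c m y = 1 + m*(1-c*y) - c * Kf a c m y * (wf a c m y)^2 - a*c - m*c*y"

lemma wf_deriv: "(wf a c m has_real_derivative (1 - a*c + m - 2*m*c*y)) (at y)"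
  unfolding wf_def[abs_def] by (auto intro!: derivative_eq_intros simp: algebra_simps)

lemma Kf_deriv:
  assumes "wf a c m y \<noteq> 0" "1 - c*y \<noteq> 0"
  shows "(Kf a c m has_real_derivative Kdf a c m y) (at y)"
proof -
  have e: "Kf a c m = (\<lambda>y. (1 / wf a c m y - 1) / (1 - c*y))" by (simp add: Kf_def[abs_def])
  show ?thesis unfolding e
    apply (rule derivative_eq_intros wf_deriv refl | simp add: assms)+
    using assms unfolding Kdf_def power2_eq_square by (simp add: divide_simps) (simp add: algebra_simps)
qed

lemma at0:
  assumes "a > 0"
  shows "wf a c m 0 = a" "Kf a c m 0 = 1/a - 1"
    "Kdf a c m 0 = - (1 + m + a^2*c - 2*a*c) / a^2"
    "Bqf a c m 0 = 1 + m + a^2*c - 2*a*c"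
  using assms by (simp_all add: wf_def Kf_def Kdf_def Bqf_def field_simps power2_eq_square)

lemma conts:
  assumes "a > 0"
  shows "isCont (wf a c m) 0" "isCont (Kdf a c m) 0" "isCont (Bqf a c m) 0"
  using assms unfolding wf_def[abs_def] Kdf_def[abs_def] Bqf_def[abs_def] Kf_def[abs_def]
  by (auto intro!: continuous_intros)


lemma stab_of:
  assumes "is_equilibrium F G k p" "has_jacobian F G k p"
    "jacobian_eigenvalues F G k p = {z. z\<^sup>2 - of_real T * z + of_real D = 0}" "T < 0" "D > 0"
  shows "lin_stable F G k p"
  unfolding lin_stable_def using assms eig_stable by auto

lemma unstab_of:
  assumes "is_equilibrium F G k p" "has_jacobian F G k p"
    "jacobian_eigenvalues F G k p = {z. z\<^sup>2 - of_real T * z + of_real D = 0}" "D < 0"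
  shows "lin_unstable F G k p"
  unfolding lin_unstable_def using assms eig_unstable[of D T] by auto

lemma E1_facts:
  fixes a b c m k :: real
  assumes "k > -1"
  shows "is_equilibrium (\<lambda>k x y. b * x * (1 - x - c * y))
           (\<lambda>k x y. y * (1 / (1 + k * x) - y - a * x - m * x * y)) k (1,0)"
    "has_jacobian (\<lambda>k x y. b * x * (1 - x - c * y))
           (\<lambda>k x y. y * (1 / (1 + k * x) - y - a * x - m * x * y)) k (1,0)"
    "jacobian_eigenvalues (\<lambda>k x y. b * x * (1 - x - c * y))
           (\<lambda>k x y. y * (1 / (1 + k * x) - y - a * x - m * x * y)) k (1,0) =
     {z. z\<^sup>2 - of_real (-b + (1/(1+k) - a)) * z + of_real (-b * (1/(1+k) - a)) = 0}"
proof -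
  have nz: "1 + k * 1 \<noteq> 0" using assms by simp
  show "is_equilibrium (\<lambda>k x y. b * x * (1 - x - c * y))
           (\<lambda>k x y. y * (1 / (1 + k * x) - y - a * x - m * x * y)) k (1,0)"
    by (simp add: is_equilibrium_def)
  show "has_jacobian (\<lambda>k x y. b * x * (1 - x - c * y))
           (\<lambda>k x y. y * (1 / (1 + k * x) - y - a * x - m * x * y)) k (1,0)"
    using jac(1)[OF nz] by simp
  show "jacobian_eigenvalues (\<lambda>k x y. b * x * (1 - x - c * y))
           (\<lambda>k x y. y * (1 / (1 + k * x) - y - a * x - m * x * y)) k (1,0) =
     {z. z\<^sup>2 - of_real (-b + (1/(1+k) - a)) * z + of_real (-b * (1/(1+k) - a)) = 0}"
    using jac(2)[OF nz, of b c a m 0] by (simp add: algebra_simps)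
qed

lemma branch_facts:
  fixes a b c m k y :: real
  assumes w: "wf a c m y > 0" and x: "1 - c*y > 0" and K: "Kf a c m y = k"
  shows "is_equilibrium (\<lambda>k x y. b * x * (1 - x - c * y))
           (\<lambda>k x y. y * (1 / (1 + k * x) - y - a * x - m * x * y)) k (1 - c*y, y)"
    "has_jacobian (\<lambda>k x y. b * x * (1 - x - c * y))
           (\<lambda>k x y. y * (1 / (1 + k * x) - y - a * x - m * x * y)) k (1 - c*y, y)"
    "jacobian_eigenvalues (\<lambda>k x y. b * x * (1 - x - c * y))
           (\<lambda>k x y. y * (1 / (1 + k * x) - y - a * x - m * x * y)) k (1 - c*y, y) =
     {z. z\<^sup>2 - of_real (-(b*(1-c*y) + y + m*(1-c*y)*y)) * z
          + of_real (b * (1-c*y) * y * Bqf a c m y) = 0}"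
proof -
  define x where "x = 1 - c*y"
  define wv where "wv = wf a c m y"
  have kx: "1 + k*x = 1/wv" using K w x unfolding Kf_def x_def wv_def by (simp add: field_simps)
  have nz: "1 + k*x \<noteq> 0" using kx w wv_def by simp
  have inv: "1/(1+k*x) = wv" using kx by simp
  have "k/(1+k*x)^2 = k * (1/(1+k*x))^2" by (simp add: power_one_over)
  hence inv2: "k/(1+k*x)^2 = k * wv^2" using inv by simp
  have wv: "wv = a*x + y + m*x*y" unfolding wv_def wf_def x_def by simp
  show "is_equilibrium (\<lambda>k x y. b * x * (1 - x - c * y))
           (\<lambda>k x y. y * (1 / (1 + k * x) - y - a * x - m * x * y)) k (1 - c*y, y)"
  proof -
    have e1: "b*x*(1 - x - c*y) = 0" by (simp add: x_def)
    have e2: "y*(1/(1+k*x) - y - a*x - m*x*y) = 0" by (simp add: inv wv)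
    show ?thesis unfolding is_equilibrium_def fst_conv snd_conv x_def[symmetric] using e1 e2 by (intro conjI)
  qed
  show "has_jacobian (\<lambda>k x y. b * x * (1 - x - c * y))
           (\<lambda>k x y. y * (1 / (1 + k * x) - y - a * x - m * x * y)) k (1 - c*y, y)"
    using jac(1)[OF nz, where a=a and b=b and c=c and m=m and y=y] unfolding x_def .
  have T: "b*(1-2*x-c*y) + (1/(1+k*x) - 2*y - a*x - 2*m*x*y) = -(b*(1-c*y) + y + m*(1-c*y)*y)"
    unfolding inv unfolding wv unfolding x_def by (simp add: algebra_simps)
  have D: "b*(1-2*x-c*y)*(1/(1+k*x) - 2*y - a*x - 2*m*x*y)
                        - (-b*c*x)*(y*(-k/(1+k*x)^2 - a - m*y)) = b * (1-c*y) * y * Bqf a c m y"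
    unfolding inv unfolding minus_divide_left[symmetric] unfolding inv2 unfolding Bqf_def K wv_def[symmetric]
    unfolding wv unfolding x_def by (simp add: algebra_simps)
  show "jacobian_eigenvalues (\<lambda>k x y. b * x * (1 - x - c * y))
           (\<lambda>k x y. y * (1 / (1 + k * x) - y - a * x - m * x * y)) k (1 - c*y, y) =
     {z. z\<^sup>2 - of_real (-(b*(1-c*y) + y + m*(1-c*y)*y)) * z
          + of_real (b * (1-c*y) * y * Bqf a c m y) = 0}"
    using jac(2)[OF nz, where a=a and b=b and c=c and m=m and y=y] unfolding T D unfolding x_def .
qed


theorem theorem8:
  fixes a b c m E :: real
  assumes "0 < a" and "a < 1" and "0 < b" and "0 < c" and "0 < m"
    and "deriv (ucubic a c m (1 / a - 1)) E = 0"
    and "\<forall>z. deriv (ucubic a c m (1 / a - 1)) z = 0 \<longrightarrow> z \<le> E"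
    and "ucubic a c m (1 / a - 1) E < 0"
    and "m \<noteq> - a\<^sup>2 * c + 2 * a * c - 1"
  shows "transcritical_bifurcation
           (\<lambda>k x y. b * x * (1 - x - c * y))
           (\<lambda>k x y. y * (1 / (1 + k * x) - y - a * x - m * x * y))
           (1, 0) (1 / a - 1)"
proof -
  note a0 = assms(1) and a1 = assms(2) and b0 = assms(3)
  define k0 where "k0 = 1/a - 1"
  define D0 where "D0 = 1 + m + a^2*c - 2*a*c"
  have D0nz: "D0 \<noteq> 0" using assms(9) unfolding D0_def by (auto simp: algebra_simps)
  have k0pos: "k0 > 0" unfolding k0_def using a0 a1 by (simp add: field_simps)
  have K0: "Kf a c m 0 = k0" using at0(2)[OF a0, of c m] k0_def by simp
  obtain d1 where d1: "d1 > 0" "\<forall>y. \<bar>y\<bar> < d1 \<longrightarrow> wf a c m y > 0"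
    using pos_nbhd[of "wf a c m"] conts(1)[OF a0, of c m] at0(1)[OF a0, of c m] a0 by auto
  obtain d2 where d2: "d2 > 0" "\<forall>y. \<bar>y\<bar> < d2 \<longrightarrow> (\<lambda>y. 1 - c*y - 1/2) y > 0"
    by (rule exE[OF pos_nbhd[of "\<lambda>y. 1 - c*y - 1/2"]]) (auto intro!: continuous_intros)
  obtain d3 where d3: "d3 > 0" "\<forall>y. \<bar>y\<bar> < d3 \<longrightarrow> (\<lambda>y. - D0 * Kdf a c m y) y > 0"
  proof -
    have "Kdf a c m 0 = - D0 / a^2" using at0(3)[OF a0, of c m] unfolding D0_def by simp
    hence "- D0 * Kdf a c m 0 = D0^2 / a^2" by (simp add: power2_eq_square)
    moreover have "D0^2 / a^2 > 0" using D0nz a0 by simp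
    ultimately have "(\<lambda>y. - D0 * Kdf a c m y) 0 > 0" by simp
    moreover have "isCont (\<lambda>y. - D0 * Kdf a c m y) 0" using conts(2)[OF a0, of c m] by (intro continuous_intros)
    ultimately show ?thesis using pos_nbhd that by blast
  qed
  obtain d4 where d4: "d4 > 0" "\<forall>y. \<bar>y\<bar> < d4 \<longrightarrow> (\<lambda>y. D0 * Bqf a c m y) y > 0"
  proof -
    have "Bqf a c m 0 = D0" using at0(4)[OF a0, of c m] unfolding D0_def by simp
    hence "(\<lambda>y. D0 * Bqf a c m y) 0 > 0" using D0nz by (auto simp: zero_less_mult_iff linorder_neq_iff)
    moreover have "isCont (\<lambda>y. D0 * Bqf a c m y) 0" using conts(3)[OF a0, of c m] by (intro continuous_intros)
    ultimately show ?thesis using pos_nbhd that by blast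
  qed
  obtain d5 where d5: "d5 > 0" "\<forall>y. \<bar>y\<bar> < d5 \<longrightarrow> (\<lambda>y. b*(1-c*y) + y + m*(1-c*y)*y) y > 0"
    using pos_nbhd[of "\<lambda>y. b*(1-c*y) + y + m*(1-c*y)*y"] b0 by (auto intro!: continuous_intros)
  define r where "r = min (min d1 d2) (min d3 (min d4 d5)) / 2"
  have r0: "r > 0" unfolding r_def using d1 d2 d3 d4 d5 by simp
  have P: "wf a c m y > 0 \<and> 1 - c*y > 1/2 \<and> D0 * Kdf a c m y < 0 \<and> D0 * Bqf a c m y > 0
      \<and> b*(1-c*y) + y + m*(1-c*y)*y > 0" if "\<bar>y\<bar> \<le> r" for y
  proof -
    have "\<bar>y\<bar> < d1" "\<bar>y\<bar> < d2" "\<bar>y\<bar> < d3" "\<bar>y\<bar> < d4" "\<bar>y\<bar> < d5"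
      using that r0 unfolding r_def by linarith+
    thus ?thesis using d1 d2 d3 d4 d5 by auto
  qed
  have Kder: "(Kf a c m has_real_derivative Kdf a c m y) (at y)" if "\<bar>y\<bar> \<le> r" for y
    using P[OF that] by (intro Kf_deriv) auto
  have mono: "D0 * (Kf a c m y1 - Kf a c m y2) > 0" if "-r \<le> y1" "y1 < y2" "y2 \<le> r" for y1 y2
  proof (cases "D0 > 0")
    case True
    have "Kf a c m y1 > Kf a c m y2"
    proof (rule DERIV_neg_imp_decreasing[OF that(2)])
      fix x assume "y1 \<le> x" "x \<le> y2"
      hence "\<bar>x\<bar> \<le> r" using that by linarith
      thus "\<exists>y. DERIV (Kf a c m) x :> y \<and> y < 0"
        using Kder P True by (meson mult_less_0_iff not_less_iff_gr_or_eq)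
    qed
    thus ?thesis using True by simp
  next
    case False
    hence Dn: "D0 < 0" using D0nz by simp
    have "Kf a c m y1 < Kf a c m y2"
    proof (rule DERIV_pos_imp_increasing[OF that(2)])
      fix x assume "y1 \<le> x" "x \<le> y2"
      hence "\<bar>x\<bar> \<le> r" using that by linarith
      thus "\<exists>y. DERIV (Kf a c m) x :> y \<and> y > 0"
        using Kder P Dn by (meson mult_less_0_iff not_less_iff_gr_or_eq)
    qed
    thus ?thesis using Dn by (simp add: mult_neg_neg)
  qed
  have inj: "inj_on (Kf a c m) {-r..r}"
  proof (rule inj_onI)
    fix y1 y2 assume h: "y1 \<in> {-r..r}" "y2 \<in> {-r..r}" "Kf a c m y1 = Kf a c m y2"
    show "y1 = y2"
    proof (rule ccontr)
      assume "y1 \<noteq> y2"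
      hence "y1 < y2 \<or> y2 < y1" by linarith
      thus False using mono h by (metis atLeastAtMost_iff diff_self less_irrefl mult_zero_right)
    qed
  qed
  have contK: "continuous_on {-r..r} (Kf a c m)"
  proof (rule continuous_at_imp_continuous_on, intro ballI)
    fix y assume "y \<in> {-r..r}"
    hence "\<bar>y\<bar> \<le> r" by auto
    thus "isCont (Kf a c m) y" using Kder DERIV_isCont by blast
  qed
  have ends: "(Kf a c m (-r) < Kf a c m 0 \<and> Kf a c m 0 < Kf a c m r) \<or>
              (Kf a c m r < Kf a c m 0 \<and> Kf a c m 0 < Kf a c m (-r))"
  proof -
    have e1: "D0 * (Kf a c m (-r) - Kf a c m 0) > 0" using mono[of "-r" 0] r0 by simp
    have e2: "D0 * (Kf a c m 0 - Kf a c m r) > 0" using mono[of 0 r] r0 by simp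
    show ?thesis using e1 e2 D0nz
      by (cases "D0 > 0") (auto simp: zero_less_mult_iff)
  qed
  obtain \<delta>1 Y where dl1: "\<delta>1 > 0" and cY: "continuous_on {k0 - \<delta>1<..<k0 + \<delta>1} Y"
    and Yp: "\<forall>k. \<bar>k - k0\<bar> < \<delta>1 \<longrightarrow> Y k \<in> {-r..r} \<and> Kf a c m (Y k) = k" and Y0: "Y k0 = 0"
    using local_inverse[OF r0 contK inj ends] unfolding K0 by blast
  define \<delta> where "\<delta> = min \<delta>1 k0"
  define \<epsilon> where "\<epsilon> = min (1/2) r"
  define Q where "Q = (\<lambda>k. (1 - c * Y k, Y k))"
  have dpos: "\<delta> > 0" unfolding \<delta>_def using dl1 k0pos by simp
  have epos: "\<epsilon> > 0" unfolding \<epsilon>_def using r0 by simp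
  have brk: "\<bar>Y k\<bar> \<le> r \<and> Kf a c m (Y k) = k" if "\<bar>k - k0\<bar> < \<delta>" for k
    using Yp that unfolding \<delta>_def by auto
  have kpos: "k > 0" if "\<bar>k - k0\<bar> < \<delta>" for k
    using that unfolding \<delta>_def by (simp add: abs_less_iff)
  have Yne: "Y k \<noteq> 0" if "\<bar>k - k0\<bar> < \<delta>" "k \<noteq> k0" for k
    using brk[OF that(1)] that(2) K0 by auto
  have sgn: "D0 * Y k * (k0 - k) > 0" if "\<bar>k - k0\<bar> < \<delta>" "k \<noteq> k0" for k
  proof -
    define y where "y = Y k"
    have yr: "\<bar>y\<bar> \<le> r" and Ky: "Kf a c m y = k" using brk[OF that(1)] y_def by auto
    have "y \<noteq> 0" using Yne[OF that] y_def by simp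
    hence "y < 0 \<or> y > 0" by linarith
    thus ?thesis
    proof
      assume yn: "y < 0"
      have "D0 * (Kf a c m y - Kf a c m 0) > 0" using mono[of y 0] yr yn r0 by simp
      hence "D0 * (k - k0) > 0" using Ky K0 by simp
      hence "(D0 * (k - k0)) * (- y) > 0" using yn by (metis mult_pos_pos neg_0_less_iff_less)
      thus ?thesis unfolding y_def[symmetric] by (simp add: algebra_simps)
    next
      assume yp: "y > 0"
      have "D0 * (Kf a c m 0 - Kf a c m y) > 0" using mono[of 0 y] yr yp r0 by simp
      hence "D0 * (k0 - k) > 0" using Ky K0 by simp
      hence "(D0 * (k0 - k)) * y > 0" using yp by (metis mult_pos_pos)
      thus ?thesis unfolding y_def[symmetric] by (simp add: algebra_simps)
    qed
  qed
  have sgnB: "Y k * Bqf a c m (Y k) * (k0 - k) > 0" if "\<bar>k - k0\<bar> < \<delta>" "k \<noteq> k0" for k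
  proof -
    have "D0 * Bqf a c m (Y k) > 0" using P brk[OF that(1)] by blast
    hence "(D0 * Y k * (k0 - k)) * (D0 * Bqf a c m (Y k)) > 0" using sgn[OF that] by (simp add: mult_pos_pos)
    hence "D0^2 * (Y k * Bqf a c m (Y k) * (k0 - k)) > 0" by (simp add: algebra_simps power2_eq_square)
    thus ?thesis by (simp add: zero_less_mult_iff)
  qed
  have f1: "\<forall>k. \<bar>k - k0\<bar> < \<delta> \<longrightarrow>
           is_equilibrium (\<lambda>k x y. b * x * (1 - x - c * y))
             (\<lambda>k x y. y * (1 / (1 + k * x) - y - a * x - m * x * y)) k (1,0) \<and>
           is_equilibrium (\<lambda>k x y. b * x * (1 - x - c * y))
             (\<lambda>k x y. y * (1 / (1 + k * x) - y - a * x - m * x * y)) k (Q k) \<and>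
           (\<forall>p. dist p (1,0) < \<epsilon> \<and> is_equilibrium (\<lambda>k x y. b * x * (1 - x - c * y))
             (\<lambda>k x y. y * (1 / (1 + k * x) - y - a * x - m * x * y)) k p \<longrightarrow> p = (1,0) \<or> p = Q k)"
  proof (intro allI impI conjI)
    fix k assume hk: "\<bar>k - k0\<bar> < \<delta>"
    show "is_equilibrium (\<lambda>k x y. b * x * (1 - x - c * y))
             (\<lambda>k x y. y * (1 / (1 + k * x) - y - a * x - m * x * y)) k (1,0)"
      by (simp add: is_equilibrium_def)
    show "is_equilibrium (\<lambda>k x y. b * x * (1 - x - c * y))
             (\<lambda>k x y. y * (1 / (1 + k * x) - y - a * x - m * x * y)) k (Q k)"
    proof -
      have "\<bar>Y k\<bar> \<le> r" "Kf a c m (Y k) = k" using brk[OF hk] by auto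
      hence "wf a c m (Y k) > 0" "1 - c * Y k > 0" using P[of "Y k"] by auto
      thus ?thesis unfolding Q_def using branch_facts(1) \<open>Kf a c m (Y k) = k\<close> by blast
    qed
    fix p assume hp: "dist p (1,0) < \<epsilon> \<and> is_equilibrium (\<lambda>k x y. b * x * (1 - x - c * y))
             (\<lambda>k x y. y * (1 / (1 + k * x) - y - a * x - m * x * y)) k p"
    obtain px py where pp: "p = (px, py)" by (cases p)
    have "dist (fst p) (fst (1::real,0::real)) \<le> dist p (1,0)" by (rule dist_fst_le)
    hence hx: "\<bar>px - 1\<bar> < \<epsilon>" using hp pp by (simp add: dist_real_def)
    have "dist (snd p) (snd (1::real,0::real)) \<le> dist p (1,0)" by (rule dist_snd_le)
    hence hy: "\<bar>py\<bar> < \<epsilon>" using hp pp by (simp add: dist_real_def)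
    have "\<bar>px - 1\<bar> < 1/2" using hx unfolding \<epsilon>_def by simp
    hence pxh: "px > 1/2" by (simp only: abs_less_iff) linarith
    have pyr: "\<bar>py\<bar> \<le> r" using hy unfolding \<epsilon>_def by simp
    have eF: "b * px * (1 - px - c * py) = 0" and
         eG: "py * (1 / (1 + k * px) - py - a * px - m * px * py) = 0"
      using hp pp unfolding is_equilibrium_def by auto
    have pxe: "px = 1 - c * py" using eF b0 pxh by simp
    show "p = (1,0) \<or> p = Q k"
    proof (cases "py = 0")
      case True
      thus ?thesis using pxe pp by simp
    next
      case False
      hence "1/(1+k*px) - py - a*px - m*px*py = 0" using eG by simp
      hence "1/(1+k*px) = a*px + py + m*px*py" by linarith
      hence h1: "1 / (1 + k * px) = wf a c m py" unfolding wf_def pxe[symmetric] .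
      have wpos: "wf a c m py > 0" using P[OF pyr] by blast
      hence nz: "1 + k * px \<noteq> 0" using h1 by auto
      have "1 + k * px = 1 / wf a c m py" using h1 nz wpos by (simp add: field_simps)
      hence "k = Kf a c m py" unfolding Kf_def using pxe pxh by (simp add: field_simps)
      hence "Kf a c m (Y k) = Kf a c m py" using brk[OF hk] by simp
      moreover have "Y k \<in> {-r..r}" "py \<in> {-r..r}" using brk[OF hk] pyr by auto
      ultimately have "Y k = py" using inj_onD[OF inj] by blast
      thus ?thesis unfolding Q_def using pp pxe by simp
    qed
  qed
  have f2: "continuous_on {k0 - \<delta><..<k0 + \<delta>} Q"
  proof -
    have "continuous_on {k0 - \<delta><..<k0 + \<delta>} Y"
      by (rule continuous_on_subset[OF cY]) (auto simp: \<delta>_def)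
    thus ?thesis unfolding Q_def by (intro continuous_intros)
  qed
  have f3: "Q k0 = (1,0)" unfolding Q_def Y0 by simp
  have f4: "\<forall>k. 0 < \<bar>k - k0\<bar> \<and> \<bar>k - k0\<bar> < \<delta> \<longrightarrow> Q k \<noteq> (1,0)"
    using Yne unfolding Q_def by auto
  have f5: "(\<forall>k. k0 - \<delta> < k \<and> k < k0 \<longrightarrow>
              lin_unstable (\<lambda>k x y. b * x * (1 - x - c * y))
                (\<lambda>k x y. y * (1 / (1 + k * x) - y - a * x - m * x * y)) k (1,0) \<and>
              lin_stable (\<lambda>k x y. b * x * (1 - x - c * y))
                (\<lambda>k x y. y * (1 / (1 + k * x) - y - a * x - m * x * y)) k (Q k)) \<and>
            (\<forall>k. k0 < k \<and> k < k0 + \<delta> \<longrightarrow>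
              lin_stable (\<lambda>k x y. b * x * (1 - x - c * y))
                (\<lambda>k x y. y * (1 / (1 + k * x) - y - a * x - m * x * y)) k (1,0) \<and>
              lin_unstable (\<lambda>k x y. b * x * (1 - x - c * y))
                (\<lambda>k x y. y * (1 / (1 + k * x) - y - a * x - m * x * y)) k (Q k))"
  proof (intro conjI allI impI)
    fix k assume hk: "k0 - \<delta> < k \<and> k < k0"
    have hk1: "\<bar>k - k0\<bar> < \<delta>" "k \<noteq> k0" using hk by auto
    have kp: "k > 0" using kpos[OF hk1(1)] .
    have "a * (1 + k) < a * (1 + k0)" using hk a0 by simp
    also have "\<dots> = 1" unfolding k0_def using a0 by simp
    finally have lam: "1/(1+k) - a > 0" using kp by (simp add: field_simps)
    show "lin_unstable (\<lambda>k x y. b * x * (1 - x - c * y))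
                (\<lambda>k x y. y * (1 / (1 + k * x) - y - a * x - m * x * y)) k (1,0)"
      by (rule unstab_of[OF E1_facts[of k]]) (use kp lam b0 in \<open>auto simp: mult_pos_pos\<close>)
    define y where "y = Y k"
    have yr: "\<bar>y\<bar> \<le> r" and Ky: "Kf a c m y = k" using brk[OF hk1(1)] y_def by auto
    have Py: "wf a c m y > 0" "1 - c*y > 0" "b*(1-c*y) + y + m*(1-c*y)*y > 0" using P[OF yr] by auto
    have "y * Bqf a c m y * (k0 - k) > 0" using sgnB[OF hk1] y_def by simp
    hence yB: "y * Bqf a c m y > 0" using hk by (simp add: zero_less_mult_iff)
    have "(b * (1-c*y)) * (y * Bqf a c m y) > 0" using b0 Py(2) yB by simp
    hence Dp: "b * (1-c*y) * y * Bqf a c m y > 0" by (simp add: algebra_simps)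
    show "lin_stable (\<lambda>k x y. b * x * (1 - x - c * y))
                (\<lambda>k x y. y * (1 / (1 + k * x) - y - a * x - m * x * y)) k (Q k)"
      unfolding Q_def y_def[symmetric]
      by (rule stab_of[OF branch_facts[OF Py(1) Py(2) Ky]]) (use Py(3) Dp in auto)
  next
    fix k assume hk: "k0 < k \<and> k < k0 + \<delta>"
    have hk1: "\<bar>k - k0\<bar> < \<delta>" "k \<noteq> k0" using hk by auto
    have kp: "k > 0" using kpos[OF hk1(1)] .
    have "a * (1 + k) > a * (1 + k0)" using hk a0 by simp
    moreover have "a * (1 + k0) = 1" unfolding k0_def using a0 by simp
    ultimately have lam: "1/(1+k) - a < 0" using kp by (simp add: field_simps)
    show "lin_stable (\<lambda>k x y. b * x * (1 - x - c * y))
                (\<lambda>k x y. y * (1 / (1 + k * x) - y - a * x - m * x * y)) k (1,0)"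
      by (rule stab_of[OF E1_facts[of k]]) (use kp lam b0 in \<open>auto simp: mult_pos_neg\<close>)
    define y where "y = Y k"
    have yr: "\<bar>y\<bar> \<le> r" and Ky: "Kf a c m y = k" using brk[OF hk1(1)] y_def by auto
    have Py: "wf a c m y > 0" "1 - c*y > 0" "b*(1-c*y) + y + m*(1-c*y)*y > 0" using P[OF yr] by auto
    have "y * Bqf a c m y * (k0 - k) > 0" using sgnB[OF hk1] y_def by simp
    hence yB: "y * Bqf a c m y < 0" using hk by (simp add: zero_less_mult_iff)
    have "(b * (1-c*y)) * (y * Bqf a c m y) < 0" using b0 Py(2) yB by (simp add: mult_pos_neg)
    hence Dn: "b * (1-c*y) * y * Bqf a c m y < 0" by (simp add: algebra_simps)
    show "lin_unstable (\<lambda>k x y. b * x * (1 - x - c * y))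
                (\<lambda>k x y. y * (1 / (1 + k * x) - y - a * x - m * x * y)) k (Q k)"
      unfolding Q_def y_def[symmetric]
      by (rule unstab_of[OF branch_facts[OF Py(1) Py(2) Ky]]) (use Dn in auto)
  qed
  have "transcritical_bifurcation
           (\<lambda>k x y. b * x * (1 - x - c * y))
           (\<lambda>k x y. y * (1 / (1 + k * x) - y - a * x - m * x * y))
           (1, 0) k0"
    unfolding transcritical_bifurcation_def
    apply (rule exI[of _ \<delta>], rule conjI[OF dpos], rule exI[of _ \<epsilon>], rule conjI[OF epos], rule exI[of _ Q])
    using f1 f2 f3 f4 f5 by blast
  thus ?thesis unfolding k0_def .
qed

end
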